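(* For all $x,h\in\mathbb R$ with $h\ne0$, $$\exp\Big(\tfrac{(x^2-1)h^2}{24}-\tfrac{x^4h^4}{960}\Big)<\frac{\Phi(x+\frac h2)-\Phi(x-\frac h2)}{h\,\phi(x)}<\exp\Big(\tfrac{(x^2-1)h^2}{24}+\tfrac{h^4}{1440}\Big).$$ Moreover, $$\log\Big(\frac{\Phi(x+\frac h2)-\Phi(x-\frac h2)}{h\,\phi(x)}\Big)=\frac{(x^2-1)h^2}{24}+\frac{(-x^4-4x^2+2)h^4}{2880}+O(h^6)$$ uniformly for $x,h$ in bounded sets (with $h\ne 0$), where $\max_{x\in\mathbb R}(-x^4-4x^2+2)=2$ and $\min_{x\in\mathbb R\setminus\{0\}}(-x^4-4x^2+2)/x^4=-3$ (as an infimum over $x\neq 0$).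
   Context: $\Phi$ is the standard normal distribution function and $\phi=\Phi'$ its density. *)

theory Defs
  imports "HOL-Probability.Probability"
begin

definition std_normal_cdf :: "real \<Rightarrow> real" where
  "std_normal_cdf x = (LBINT t:{..x}. std_normal_density t)"

definition ratio31 :: "real \<Rightarrow> real \<Rightarrow> real" where
  "ratio31 x h = (std_normal_cdf (x + h/2) - std_normal_cdf (x - h/2)) / (h * std_normal_density x)"

end

theory Submission
  imports Defs
begin


lemma incr_helper:
  fixes f f' :: "real \<Rightarrow> real"
  assumes "0 < c" "c \<le> b" and d: "\<And>t. 0 \<le> t \<Longrightarrow> t \<le> b \<Longrightarrow> (f has_real_derivative f' t) (at t)"
    and nn: "\<And>t. 0 \<le> t \<Longrightarrow> t \<le> b \<Longrightarrow> 0 \<le> f' t" and pos: "\<And>t. 0 < t \<Longrightarrow> t \<le> c \<Longrightarrow> 0 < f' t"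
  shows "f 0 < f b"
proof -
  have D: "\<exists>y. (f has_real_derivative y) (at t) \<and> 0 \<le> y" if "0 \<le> t" "t \<le> b" for t
    using d[OF that] nn[OF that] by blast
  have P: "\<exists>y. (f has_real_derivative y) (at t) \<and> 0 < y" if "c/2 \<le> t" "t \<le> c" for t
    using d[of t] pos[of t] that assms(1,2) by auto
  have "f 0 \<le> f (c/2)"
    by (rule DERIV_nonneg_imp_nondecreasing) (use assms D in auto)
  also have "f (c/2) < f c"
    by (rule DERIV_pos_imp_increasing) (use assms P in auto)
  also have "f c \<le> f b"
    by (rule DERIV_nonneg_imp_nondecreasing) (use assms D in auto)
  finally show ?thesis .
qed

lemma cosh_real_eq: "cosh (y::real) = (exp y + exp (-y)) / 2"
  by (simp add: cosh_def)
lemma sinh_real_eq: "sinh (y::real) = (exp y - exp (-y)) / 2"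
  by (simp add: sinh_def)

lemma cosh_upper_aux:
  fixes y :: real assumes "0 \<le> y"
  shows "cosh y \<le> exp (y^2/6) * (1 + y^2/3)"
proof -
  define Q where "Q y = exp (y^2/6 - y) * (1 + y + y^2/3 + y^3/9) - 1" for y :: real
  have Q: "exp y \<le> exp (y^2/6) * (1 + y + y^2/3 + y^3/9)" if "0 \<le> y" for y :: real
  proof -
    have "Q 0 \<le> Q y"
    proof (rule DERIV_nonneg_imp_nondecreasing[OF that])
      fix t :: real assume "0 \<le> t" "t \<le> y"
      show "\<exists>d. (Q has_real_derivative d) (at t) \<and> 0 \<le> d"
      proof (intro exI conjI)
        show "(Q has_real_derivative exp (t^2/6 - t) * (t^2/3 + t^4/27)) (at t)"
          unfolding Q_def by (auto intro!: derivative_eq_intros) (simp add: algebra_simps power2_eq_square power3_eq_cube power4_eq_xxxx add_divide_distrib diff_divide_distrib)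
      qed simp
    qed
    then have "1 \<le> exp (y^2/6 - y) * (1 + y + y^2/3 + y^3/9)" by (simp add: Q_def)
    then have "exp y * 1 \<le> exp y * (exp (y^2/6 - y) * (1 + y + y^2/3 + y^3/9))"
      by (intro mult_left_mono) auto
    also have "\<dots> = exp (y^2/6) * (1 + y + y^2/3 + y^3/9)"
      by (simp add: exp_diff)
    finally show ?thesis by simp
  qed
  define S where "S y = exp (y^2/6 + y) * (1 + y^2/3) - (exp (2*y) + 1)/2" for y :: real
  have "S 0 \<le> S y"
  proof (rule DERIV_nonneg_imp_nondecreasing[OF assms])
    fix t :: real assume t: "0 \<le> t" "t \<le> y"
    have e: "exp (t^2/6 + t) * (1 + t + t^2/3 + t^3/9) - exp (2*t) = exp t * (exp (t^2/6) * (1 + t + t^2/3 + t^3/9) - exp t)"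
    proof -
      have "exp (2*t) = exp t * exp t" by (simp flip: exp_add)
      then show ?thesis by (simp add: exp_add algebra_simps)
    qed
    have "(S has_real_derivative exp (t^2/6 + t) * (1 + t + t^2/3 + t^3/9) - exp (2*t)) (at t)"
      unfolding S_def
      by (auto intro!: derivative_eq_intros) (simp add: algebra_simps power2_eq_square power3_eq_cube add_divide_distrib diff_divide_distrib)
    moreover have "0 \<le> exp (t^2/6 + t) * (1 + t + t^2/3 + t^3/9) - exp (2*t)"
      unfolding e using Q[OF t(1)] by simp
    ultimately show "\<exists>d. (S has_real_derivative d) (at t) \<and> 0 \<le> d" by blast
  qed
  then have "(exp (2*y) + 1)/2 \<le> exp (y^2/6 + y) * (1 + y^2/3)" by (simp add: S_def)
  then have "(exp (2*y) + 1)/2 * exp (-y) \<le> exp (y^2/6 + y) * (1 + y^2/3) * exp (-y)"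
    by (intro mult_right_mono) auto
  moreover have "(exp (2*y) + 1)/2 * exp (-y) = cosh y"
    by (simp add: cosh_real_eq algebra_simps flip: exp_add)
  moreover have "exp (y^2/6 + y) * (1 + y^2/3) * exp (-y) = exp (y^2/6) * (1 + y^2/3)"
    by (simp add: algebra_simps flip: exp_add)
  ultimately show ?thesis by simp
qed

lemma cosh_upper: "cosh (y::real) \<le> exp (y^2/6) * (1 + y^2/3)"
  using cosh_upper_aux[of y] cosh_upper_aux[of "-y"] by (cases "0 \<le> y") auto


lemma exp_poly_strict:
  fixes s :: real assumes "0 < s"
  shows "exp (-(s/3) - s^2/90) < 1 - s/3 + 2 * s^2 / 45"
proof -
  define k where "k s = (1 - s/3 + 2 * s^2 / 45) * exp (s/3 + s^2/90) - 1" for s :: real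
  have "k 0 < k s"
  proof (rule incr_helper[OF assms order_refl])
    fix t :: real
    show "(k has_real_derivative exp (t/3 + t^2/90) * (t^2/135 + 2 * t^3 / 2025)) (at t)"
      unfolding k_def
      by (auto intro!: derivative_eq_intros) (simp add: algebra_simps power2_eq_square power3_eq_cube add_divide_distrib diff_divide_distrib)
    show "0 \<le> exp (t/3 + t^2/90) * (t^2/135 + 2 * t^3 / 2025)" if "0 \<le> t" for t :: real
      using that by simp
    show "0 < exp (t/3 + t^2/90) * (t^2/135 + 2 * t^3 / 2025)" if "0 < t" for t :: real
      using that by (simp add: add_pos_pos)
  qed
  then have "1 < (1 - s/3 + 2 * s^2 / 45) * exp (s/3 + s^2/90)" by (simp add: k_def)
  then have "exp (-(s/3) - s^2/90) * 1 < exp (-(s/3) - s^2/90) * ((1 - s/3 + 2 * s^2 / 45) * exp (s/3 + s^2/90))"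
    by (intro mult_strict_left_mono) auto
  also have "\<dots> = 1 - s/3 + 2 * s^2 / 45"
    by (simp flip: exp_add)
  finally show ?thesis by simp
qed

lemma ycosh_sinh: "0 \<le> (y::real) \<Longrightarrow> sinh y \<le> y * cosh y"
proof -
  assume y: "0 \<le> y"
  define K where "K y = y * cosh y - sinh y" for y :: real
  have "K 0 \<le> K y"
  proof (rule DERIV_nonneg_imp_nondecreasing[OF y])
    fix t :: real assume "0 \<le> t" "t \<le> y"
    moreover have "(K has_real_derivative t * sinh t) (at t)"
      unfolding K_def by (auto intro!: derivative_eq_intros)
    ultimately show "\<exists>d. (K has_real_derivative d) (at t) \<and> 0 \<le> d"
      by (intro exI[of _ "t * sinh t"]) auto
  qed
  then show ?thesis by (simp add: K_def)
qed

lemma cosh_lower_aux: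
  fixes y :: real assumes "0 < y"
  shows "exp (y^2/2 - y^4/12) < cosh y"
proof -
  define M where "M y = sinh y - (y - y^3/3) * cosh y" for y :: real
  have dM: "(M has_real_derivative y * (y * cosh y - sinh y) + y^3/3 * sinh y) (at y)" for y
    unfolding M_def
    by (auto intro!: derivative_eq_intros) (simp add: algebra_simps power2_eq_square power3_eq_cube add_divide_distrib diff_divide_distrib)
  have Mpos: "0 < M t" if "0 < t" for t :: real
  proof -
    have "M 0 < M t"
    proof (rule incr_helper[OF that order_refl dM])
      fix u :: real
      show "0 \<le> u * (u * cosh u - sinh u) + u^3/3 * sinh u" if "0 \<le> u" for u :: real
        using that ycosh_sinh[OF that] by (intro add_nonneg_nonneg mult_nonneg_nonneg) auto
      show "0 < u * (u * cosh u - sinh u) + u^3/3 * sinh u" if "0 < u" for u :: real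
        using that ycosh_sinh[of u] by (intro add_nonneg_pos mult_nonneg_nonneg mult_pos_pos) auto
    qed
    then show ?thesis by (simp add: M_def)
  qed
  define L where "L y = cosh y * exp (y^4/12 - y^2/2) - 1" for y :: real
  have "L 0 < L y"
  proof (rule incr_helper[OF assms order_refl])
    fix t :: real
    show "(L has_real_derivative exp (t^4/12 - t^2/2) * M t) (at t)"
      unfolding L_def M_def
      by (auto intro!: derivative_eq_intros) (simp add: algebra_simps power2_eq_square power3_eq_cube power4_eq_xxxx add_divide_distrib diff_divide_distrib)
    show "0 \<le> exp (t^4/12 - t^2/2) * M t" if "0 \<le> t" for t :: real
      using that Mpos[of t] by (cases "t = 0") (auto simp: M_def)
    show "0 < exp (t^4/12 - t^2/2) * M t" if "0 < t" for t :: real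
      using that Mpos[of t] by simp
  qed
  then have "1 < cosh y * exp (y^4/12 - y^2/2)" by (simp add: L_def)
  then have "exp (y^2/2 - y^4/12) * 1 < exp (y^2/2 - y^4/12) * (cosh y * exp (y^4/12 - y^2/2))"
    by (intro mult_strict_left_mono) auto
  also have "\<dots> = cosh y"
    by (simp add: mult.left_commute flip: exp_add)
  finally show ?thesis by simp
qed

lemma cosh_lower_strict: "(y::real) \<noteq> 0 \<Longrightarrow> exp (y^2/2 - y^4/12) < cosh y"
  using cosh_lower_aux[of y] cosh_lower_aux[of "-y"] by (cases "0 < y") auto

lemma cosh_lower: "exp ((y::real)^2/2 - y^4/12) \<le> cosh y"
  using cosh_lower_strict[of y] by (cases "y = 0") auto



lemma Phi_diff:
  assumes "w \<le> v"
  shows "std_normal_cdf v - std_normal_cdf w = (LBINT t=w..v. std_normal_density t)"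
proof -
  have U: "{..v} = {..w} \<union> {w<..v}" using assms by auto
  have si: "set_integrable lborel A std_normal_density" if "A \<in> sets lborel" for A
    unfolding set_integrable_def by (rule integrable_mult_indicator[OF that]) (rule integrable_normal_density, simp)
  have "std_normal_cdf v = (LBINT t:{..w}. std_normal_density t) + (LBINT t:{w<..v}. std_normal_density t)"
    unfolding std_normal_cdf_def U by (rule set_integral_Un) (auto intro!: si)
  then show ?thesis using interval_integral_Ioc[of w v std_normal_density] assms by (simp add: std_normal_cdf_def)
qed

lemma Phi_deriv: "(std_normal_cdf has_real_derivative std_normal_density x) (at x)"
proof -
  have c: "continuous_on {x-1..x+1} std_normal_density"
    unfolding std_normal_density_def by (intro continuous_intros) auto
  have "((\<lambda>u. LBINT y=(x-1)..u. std_normal_density y) has_vector_derivative std_normal_density x) (at x within {x-1..x+1})"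
    by (rule interval_integral_FTC2[OF _ _ c]) auto
  then have "((\<lambda>u. std_normal_cdf (x-1) + (LBINT y=(x-1)..u. std_normal_density y)) has_vector_derivative std_normal_density x) (at x within {x-1..x+1})"
    by (auto intro!: derivative_eq_intros)
  then have "(std_normal_cdf has_vector_derivative std_normal_density x) (at x within {x-1..x+1})"
    by (rule has_vector_derivative_weaken[where S="{x-1..x+1}"]) (auto simp: Phi_diff[symmetric])
  then show ?thesis
    by (simp add: has_real_derivative_iff_has_vector_derivative at_within_Icc_at)
qed

lemma Phi_deriv2: "((\<lambda>a. std_normal_cdf (x + c * a)) has_real_derivative std_normal_density (x + c * a) * c) (at a)"
proof -
  have "((\<lambda>a. x + c * a) has_real_derivative c) (at a)" by (auto intro!: derivative_eq_intros)
  from DERIV_chain2[OF Phi_deriv this] show ?thesis .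
qed

definition Nf :: "real \<Rightarrow> real \<Rightarrow> real" where
  "Nf x a = (std_normal_cdf (x + a) - std_normal_cdf (x - a)) / (2 * std_normal_density x)"

lemma dens_pos: "0 < std_normal_density x"
  by (simp add: std_normal_density_def)

lemma dens_shift: "std_normal_density (x + t) = std_normal_density x * exp (-(x*t) - t^2/2)"
proof -
  have "-((x+t)^2)/2 = -(x^2)/2 + (-(x*t) - t^2/2)" by (simp add: field_simps power2_eq_square)
  then show ?thesis by (simp only: std_normal_density_def exp_add)
qed

lemma Nf_deriv: "(Nf x has_real_derivative cosh (x*a) * exp (-(a^2)/2)) (at a)"
proof -
  have d: "((\<lambda>a. std_normal_cdf (x + 1 * a) - std_normal_cdf (x + (-1) * a)) has_real_derivative
      std_normal_density (x + 1 * a) * 1 - std_normal_density (x + (-1) * a) * (-1)) (at a)"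
    by (intro DERIV_diff Phi_deriv2)
  have e: "std_normal_density (x + 1 * a) * 1 - std_normal_density (x + (-1) * a) * (-1)
      = 2 * std_normal_density x * (cosh (x*a) * exp (-(a^2)/2))"
  proof -
    have 1: "std_normal_density (x + 1 * a) = std_normal_density x * (exp (-(x*a)) * exp (-(a^2)/2))"
    proof -
      have "-(x*a) - a^2/2 = -(x*a) + (-(a^2)/2)" by simp
      then show ?thesis using dens_shift[of x a] by (simp only: exp_add mult_1)
    qed
    have 2: "std_normal_density (x + (-1) * a) = std_normal_density x * (exp (x*a) * exp (-(a^2)/2))"
    proof -
      have "-(x*(-1*a)) - (-1*a)^2/2 = x*a + (-(a^2)/2)" by simp
      then show ?thesis using dens_shift[of x "-1*a"] by (simp only: exp_add)
    qed
    show ?thesis unfolding 1 2 by (simp add: cosh_real_eq algebra_simps)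
  qed
  have "((\<lambda>a. (std_normal_cdf (x + 1 * a) - std_normal_cdf (x + (-1) * a)) / (2 * std_normal_density x)) has_real_derivative
      (2 * std_normal_density x * (cosh (x*a) * exp (-(a^2)/2))) / (2 * std_normal_density x)) (at a)"
    using DERIV_cdivide[OF d, of "2 * std_normal_density x"] unfolding e .
  moreover have "Nf x = (\<lambda>a. (std_normal_cdf (x + a) - std_normal_cdf (x - a)) / (2 * std_normal_density x))"
    by (rule ext) (simp add: Nf_def)
  ultimately show ?thesis using dens_pos[of x] by simp
qed

lemma Nf_0: "Nf x 0 = 0" by (simp add: Nf_def)

lemma ratio_Nf: "h \<noteq> 0 \<Longrightarrow> ratio31 x h = Nf x (h/2) / (h/2)"
  using dens_pos[of x] by (simp add: ratio31_def Nf_def field_simps)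

lemma aux_neg: "((a::real) - b)/(-h*c) = (b-a)/(h*c)"
  by (metis minus_diff_eq minus_divide_divide mult_minus_left)
lemma ratio_even: "ratio31 x (-h) = ratio31 x h"
proof -
  have "ratio31 x (-h) = (std_normal_cdf (x - h/2) - std_normal_cdf (x + h/2)) / (-h * std_normal_density x)"
    by (simp add: ratio31_def)
  also have "\<dots> = ratio31 x h" unfolding aux_neg ratio31_def ..
  finally show ?thesis .
qed



lemma upper_pointwise:
  fixes x t :: real assumes t: "0 < t"
  shows "cosh (x*t) * exp (-(t^2)/2) < exp ((x^2-1)*t^2/6 + t^4/90) * (1 + (x^2-1)*t^2/3 + 2*t^4/45)"
proof -
  define s where "s = t^2"
  have s: "0 < s" using t by (simp add: s_def)
  define A where "A = x^2*t^2/3"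
  define B where "B = -(s/3) + 2 * s^2 / 45"
  define E1 where "E1 = exp (x^2*t^2/6)"
  define E2 where "E2 = exp (-(t^2)/6 + t^4/90)"
  define ex where "ex = exp (-(s/3) - s^2/90)"
  have A0: "0 \<le> A" by (simp add: A_def)
  have t4: "t^4 = s^2" by (simp add: s_def flip: power_mult)
  have q1: "(x^2-1)*t^2/6 + t^4/90 = x^2*t^2/6 + (-(t^2)/6 + t^4/90)"
    by (simp add: algebra_simps diff_divide_distrib add_divide_distrib)
  have e1: "exp ((x^2-1)*t^2/6 + t^4/90) = E1 * E2"
    unfolding E1_def E2_def q1 by (rule exp_add)
  have q2: "-(t^2)/2 = (-(t^2)/6 + t^4/90) + (-(s/3) - s^2/90)"
    unfolding t4 s_def by simp
  have e2: "exp (-(t^2)/2) = E2 * ex"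
    unfolding E2_def ex_def q2 by (rule exp_add)
  have AB: "1 + (x^2-1)*t^2/3 + 2*t^4/45 = 1 + A + B"
  proof -
    have "B = -(t^2/3) + 2*t^4/45" unfolding B_def s_def t4[symmetric] s_def by simp
    then show ?thesis unfolding A_def by (simp add: algebra_simps diff_divide_distrib add_divide_distrib)
  qed
  have ch: "cosh (x*t) \<le> E1 * (1 + A)"
    using cosh_upper[of "x*t"] by (simp add: E1_def A_def power_mult_distrib)
  define m where "m = min 1 (1 + B)"
  have exm: "ex < m"
  proof -
    have "-(s/3) - s^2/90 < 0" using s zero_le_power2[of s] by linarith
    then have "ex < 1" unfolding ex_def by simp
    moreover have "ex < 1 + B" unfolding ex_def B_def using exp_poly_strict[OF s] by simp
    ultimately show ?thesis by (simp add: m_def)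
  qed
  have Am: "(1 + A) * m \<le> 1 + A + B"
  proof (cases "B \<le> 0")
    case True
    then have "m = 1 + B" by (simp add: m_def)
    moreover have "A * B \<le> 0" using A0 True by (simp add: mult_nonneg_nonpos)
    ultimately show ?thesis by (simp add: algebra_simps)
  next
    case False
    then show ?thesis using A0 by (simp add: m_def)
  qed
  have pos: "0 < E1 * (1 + A) * E2" using A0 by (simp add: E1_def E2_def)
  have "cosh (x*t) * exp (-(t^2)/2) = cosh (x*t) * E2 * ex" unfolding e2 by (simp add: mult.assoc)
  also have "\<dots> \<le> E1 * (1 + A) * E2 * ex"
    by (intro mult_right_mono ch) (auto simp: E2_def ex_def)
  also have "\<dots> < E1 * (1 + A) * E2 * m"
    by (rule mult_strict_left_mono[OF exm pos])
  also have "\<dots> = E1 * E2 * ((1 + A) * m)" by (simp add: algebra_simps)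
  also have "\<dots> \<le> E1 * E2 * (1 + A + B)"
    by (rule mult_left_mono[OF Am]) (simp add: E1_def E2_def)
  also have "\<dots> = exp ((x^2-1)*t^2/6 + t^4/90) * (1 + (x^2-1)*t^2/3 + 2*t^4/45)"
    by (simp add: e1 AB)
  finally show ?thesis .
qed

lemma upper_N:
  fixes x a :: real assumes a: "0 < a"
  shows "Nf x a < a * exp ((x^2-1)*a^2/6 + a^4/90)"
proof -
  define U where "U t = t * exp ((x^2-1)*t^2/6 + t^4/90) - Nf x t" for t
  have "U 0 < U a"
  proof (rule incr_helper[OF a order_refl])
    fix t :: real
    show "(U has_real_derivative exp ((x^2-1)*t^2/6 + t^4/90) * (1 + (x^2-1)*t^2/3 + 2*t^4/45) - cosh (x*t) * exp (-(t^2)/2)) (at t)"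
      unfolding U_def
      by (auto intro!: derivative_eq_intros Nf_deriv) (simp add: algebra_simps power2_eq_square power3_eq_cube power4_eq_xxxx add_divide_distrib diff_divide_distrib)
    show "0 < exp ((x^2-1)*t^2/6 + t^4/90) * (1 + (x^2-1)*t^2/3 + 2*t^4/45) - cosh (x*t) * exp (-(t^2)/2)" if "0 < t"
      using upper_pointwise[OF that, of x] by simp
    show "0 \<le> exp ((x^2-1)*t^2/6 + t^4/90) * (1 + (x^2-1)*t^2/3 + 2*t^4/45) - cosh (x*t) * exp (-(t^2)/2)" if "0 \<le> t"
      using upper_pointwise[of t x] that by (cases "t = 0") auto
  qed
  then show ?thesis by (simp add: U_def Nf_0)
qed

lemma exp_gt_lin:
  assumes u: "0 < (u::real)" shows "1 + u < exp u"
proof -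
  have "0 < u^2/2" using u by simp
  moreover have "1 + u + u^2/2 \<le> exp u" using exp_lower_Taylor_quadratic u by simp
  ultimately show ?thesis by linarith
qed

lemma lower_N:
  fixes x a :: real assumes a: "0 < a"
  shows "a * exp ((x^2-1)*a^2/6 - x^4*a^4/60) < Nf x a"
proof -
  define c where "c = (x^2-1)*a^2/6 - x^4*a^4/60"
  define g where "g t = (x^2-1)*t^2/2 - x^4*t^4/12" for t
  define D where "D t = Nf x t - exp c * (t*(1-c) + (x^2-1)*t^3/6 - x^4*t^5/60)" for t
  have pw1: "exp (g t) \<le> cosh (x*t) * exp (-(t^2)/2)" for t
  proof -
    have "exp (g t) = exp ((x*t)^2/2 - (x*t)^4/12) * exp (-(t^2)/2)"
      unfolding g_def by (simp add: field_simps power_mult_distrib flip: exp_add)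
    then show ?thesis using cosh_lower[of "x*t"] by simp
  qed
  have pw1s: "exp (g t) < cosh (x*t) * exp (-(t^2)/2)" if "x \<noteq> 0" "0 < t" for t
  proof -
    have "exp (g t) = exp ((x*t)^2/2 - (x*t)^4/12) * exp (-(t^2)/2)"
      unfolding g_def by (simp add: field_simps power_mult_distrib flip: exp_add)
    then show ?thesis using cosh_lower_strict[of "x*t"] that by simp
  qed
  have pw2: "exp c * (1 - c + g t) \<le> exp (g t)" for t
  proof -
    have "exp c * (1 + (g t - c)) \<le> exp c * exp (g t - c)"
      by (intro mult_left_mono) auto
    then show ?thesis by (simp add: algebra_simps flip: exp_add)
  qed
  have pw2s: "exp c * (1 - c + g t) < exp (g t)" if "0 < g t - c" for t
  proof -
    have "exp c * (1 + (g t - c)) < exp c * exp (g t - c)"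
      by (intro mult_strict_left_mono exp_gt_lin that) auto
    then show ?thesis by (simp add: algebra_simps flip: exp_add)
  qed
  have "D 0 < D a"
  proof (rule incr_helper[of "a/2"])
    show "0 < a/2" "a/2 \<le> a" using a by auto
    fix t :: real
    show "(D has_real_derivative cosh (x*t) * exp (-(t^2)/2) - exp c * (1 - c + g t)) (at t)"
      unfolding D_def g_def
      by (auto intro!: derivative_eq_intros Nf_deriv) (simp add: algebra_simps power2_eq_square power3_eq_cube power4_eq_xxxx add_divide_distrib diff_divide_distrib)
    show "0 \<le> cosh (x*t) * exp (-(t^2)/2) - exp c * (1 - c + g t)"
      using pw1[of t] pw2[of t] by simp
    show "0 < cosh (x*t) * exp (-(t^2)/2) - exp c * (1 - c + g t)" if "0 < t" "t \<le> a/2"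
    proof (cases "x = 0")
      case False
      then show ?thesis using pw1s[OF False that(1)] pw2[of t] by simp
    next
      case True
      have "t^2 \<le> (a/2)^2" using that by (intro power_mono) auto
      moreover have "0 < t*t" using that(1) by simp
      ultimately have "0 < g t - c" using True a by (simp add: g_def c_def power2_eq_square field_simps)
      then show ?thesis using pw1[of t] pw2s[of t] by simp
    qed
  qed
  moreover have "D a = Nf x a - exp c * a"
  proof -
    have "a*(1-c) + (x^2-1)*a^3/6 - x^4*a^5/60 = a"
    proof -
      have "a*c = (x^2-1)*a^3/6 - x^4*a^5/60"
        unfolding c_def by (simp add: eval_nat_numeral algebra_simps diff_divide_distrib)
      then show ?thesis by (simp add: algebra_simps)
    qed
    then show ?thesis by (simp add: D_def)
  qed
  ultimately show ?thesis by (simp add: D_def Nf_0 c_def algebra_simps)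
qed

lemma part1:
  fixes x h :: real assumes "h \<noteq> 0"
  shows "exp ((x^2 - 1) * h^2 / 24 - x^4 * h^4 / 960) < ratio31 x h \<and>
           ratio31 x h < exp ((x^2 - 1) * h^2 / 24 + h^4 / 1440)"
proof -
  have main: "exp ((x^2 - 1) * h^2 / 24 - x^4 * h^4 / 960) < ratio31 x h \<and>
           ratio31 x h < exp ((x^2 - 1) * h^2 / 24 + h^4 / 1440)" if h: "0 < h" for h
  proof -
    define a where "a = h/2"
    have a: "0 < a" using h by (simp add: a_def)
    have r: "ratio31 x h = Nf x a / a" using ratio_Nf[of h x] h by (simp add: a_def)
    have e1: "(x^2 - 1) * h^2 / 24 - x^4 * h^4 / 960 = (x^2-1)*a^2/6 - x^4*a^4/60"
      by (simp add: a_def power_divide)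
    have e2: "(x^2 - 1) * h^2 / 24 + h^4 / 1440 = (x^2-1)*a^2/6 + a^4/90"
      by (simp add: a_def power_divide)
    show ?thesis unfolding r e1 e2
      using lower_N[OF a, of x] upper_N[OF a, of x] a
      by (simp add: field_simps)
  qed
  show ?thesis
  proof (cases "0 < h")
    case True then show ?thesis using main by blast
  next
    case False
    then have "0 < -h" using assms by simp
    from main[OF this] show ?thesis by (simp add: ratio_even)
  qed
qed



lemma exp_taylor3: "\<bar>exp (u::real) - (1 + u + u^2/2)\<bar> \<le> exp \<bar>u\<bar> * \<bar>u\<bar>^3 / 6"
proof -
  obtain th where th: "\<bar>th\<bar> \<le> \<bar>u\<bar>" "exp u = (\<Sum>m<3. u^m / fact m) + exp th / fact 3 * u^3"
    using Maclaurin_exp_le[of u 3] by blast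
  have s: "(\<Sum>m<3. u^m / fact m) = 1 + u + u^2/2"
    by (simp add: lessThan_nat_numeral fact_numeral)
  have "\<bar>exp u - (1 + u + u^2/2)\<bar> = exp th * \<bar>u\<bar>^3 / 6"
    using th(2) unfolding s by (simp add: fact_numeral abs_mult power_abs)
  also have "\<dots> \<le> exp \<bar>u\<bar> * \<bar>u\<bar>^3 / 6"
    using th(1) by (intro divide_right_mono mult_right_mono) auto
  finally show ?thesis .
qed

lemma exp_taylor6: "\<bar>exp (u::real) - (1 + u + u^2/2 + u^3/6 + u^4/24 + u^5/120)\<bar> \<le> exp \<bar>u\<bar> * u^6 / 720"
proof -
  obtain th where th: "\<bar>th\<bar> \<le> \<bar>u\<bar>" "exp u = (\<Sum>m<6. u^m / fact m) + exp th / fact 6 * u^6"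
    using Maclaurin_exp_le[of u 6] by blast
  have s: "(\<Sum>m<6. u^m / fact m) = 1 + u + u^2/2 + u^3/6 + u^4/24 + u^5/120"
    by (simp add: lessThan_nat_numeral fact_numeral)
  have "\<bar>exp u - (1 + u + u^2/2 + u^3/6 + u^4/24 + u^5/120)\<bar> = exp th * u^6 / 720"
    using th(2) unfolding s by (simp add: fact_numeral abs_mult)
  also have "\<dots> \<le> exp \<bar>u\<bar> * u^6 / 720"
    using th(1) by (intro divide_right_mono mult_right_mono) auto
  finally show ?thesis .
qed

lemma cosh_taylor: "\<bar>cosh (y::real) - (1 + y^2/2 + y^4/24)\<bar> \<le> exp \<bar>y\<bar> * y^6 / 720"
proof -
  have c: "cosh y - (1 + y^2/2 + y^4/24) =
     ((exp y - (1 + y + y^2/2 + y^3/6 + y^4/24 + y^5/120)) +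
      (exp (-y) - (1 + (-y) + (-y)^2/2 + (-y)^3/6 + (-y)^4/24 + (-y)^5/120))) / 2"
    by (simp add: cosh_real_eq field_simps)
  have 1: "\<bar>exp y - (1 + y + y^2/2 + y^3/6 + y^4/24 + y^5/120)\<bar> \<le> exp \<bar>y\<bar> * y^6 / 720"
    by (rule exp_taylor6)
  have e6: "(-y)^6 = y^6" by simp
  have 2: "\<bar>exp (-y) - (1 + (-y) + (-y)^2/2 + (-y)^3/6 + (-y)^4/24 + (-y)^5/120)\<bar> \<le> exp \<bar>y\<bar> * y^6 / 720"
    using exp_taylor6[of "-y"] by (simp only: abs_minus_cancel e6)
  have h: "\<bar>P\<bar> \<le> E \<Longrightarrow> \<bar>Q\<bar> \<le> E \<Longrightarrow> \<bar>(P + Q)/2\<bar> \<le> E" for P Q E :: real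
    by (simp add: abs_le_iff)
  show ?thesis unfolding c by (rule h[OF 1 2])
qed


lemma polyid: "(1 + X*T/2 + X^2*T^2/24) * (1 - T/2 + T^2/8) - (1 + (X-1)*T/2 + (X^2 - 6*X + 3)*T^2/24) = (X/16 - X^2/48 + X^2*T/192)*(T^3::real)"
  by (simp add: field_simps power2_eq_square power3_eq_cube)

lemma abs_mult_le: "\<bar>u\<bar> \<le> U \<Longrightarrow> \<bar>v\<bar> \<le> V \<Longrightarrow> \<bar>u * v\<bar> \<le> U * (V::real)"
  by (simp add: abs_mult mult_mono')

lemma cosh_le_exp_abs: "cosh (y::real) \<le> exp \<bar>y\<bar>"
  by (cases "0 \<le> y") (auto simp: cosh_real_eq)

definition K0 :: "real \<Rightarrow> real" where
  "K0 R = exp (R^2) * exp (R^2/2) / 48 + exp (R^2) * R^6 / 720 * (1 + R^2/2 + R^4/8) + (R^2/16 + R^4/48 + R^6/192)"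

lemma integrand_bound:
  fixes R x t :: real assumes R: "0 < R" and x: "\<bar>x\<bar> \<le> R" and t: "0 \<le> t" "t \<le> R"
  shows "\<bar>cosh (x*t) * exp (-(t^2)/2) - (1 + (x^2-1)*t^2/2 + (x^4 - 6*x^2 + 3)*t^4/24)\<bar> \<le> K0 R * t^6"
proof -
  define y where "y = x*t"
  define u where "u = -(t^2)/2"
  define c4 where "c4 = 1 + y^2/2 + y^4/24"
  define e4 where "e4 = 1 + u + u^2/2"
  define q where "q = 1 + (x^2-1)*t^2/2 + (x^4 - 6*x^2 + 3)*t^4/24"
  have dec: "cosh y * exp u - q = cosh y * (exp u - e4) + (cosh y - c4) * e4 + (c4 * e4 - q)"
    by (simp add: algebra_simps)
  have xn: "x^n \<le> R^n" for n :: nat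
    using power_mono[OF x abs_ge_zero, of n] abs_ge_self[of "x^n"] by (metis order_trans power_abs)
  have x2: "x^2 \<le> R^2" by (rule xn)
  have t2: "t^2 \<le> R^2" using t by (intro power_mono) auto
  have x4: "x^4 \<le> R^4" by (rule xn)
  have t4: "t^4 \<le> R^4" using t by (intro power_mono) auto
  have x6: "x^6 \<le> R^6" by (rule xn)
  have yR: "\<bar>y\<bar> \<le> R^2"
    unfolding y_def abs_mult power2_eq_square using x t by (intro mult_mono) auto
  have B1: "\<bar>cosh y\<bar> \<le> exp (R^2)"
    using cosh_le_exp_abs[of y] yR by (simp add: abs_of_pos order_trans)
  have B2: "\<bar>exp u - e4\<bar> \<le> exp (R^2/2) * (t^6/48)"
  proof -
    have au: "\<bar>u\<bar> = t^2/2" by (simp add: u_def)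
    have "\<bar>exp u - e4\<bar> \<le> exp \<bar>u\<bar> * \<bar>u\<bar>^3 / 6" unfolding e4_def by (rule exp_taylor3)
    also have "\<dots> = exp (t^2/2) * (t^6/48)" unfolding au by (simp add: power_divide flip: power_mult)
    also have "\<dots> \<le> exp (R^2/2) * (t^6/48)" using t2 by (intro mult_right_mono) auto
    finally show ?thesis .
  qed
  have B3: "\<bar>cosh y - c4\<bar> \<le> exp (R^2) * R^6 / 720 * t^6"
  proof -
    have "\<bar>cosh y - c4\<bar> \<le> exp \<bar>y\<bar> * y^6 / 720" unfolding c4_def by (rule cosh_taylor)
    also have "\<dots> = exp \<bar>y\<bar> * x^6 / 720 * t^6" by (simp add: y_def power_mult_distrib)
    also have "\<dots> \<le> exp (R^2) * R^6 / 720 * t^6"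
      using yR x6 by (intro mult_right_mono divide_right_mono mult_mono) auto
    finally show ?thesis .
  qed
  have B4: "\<bar>e4\<bar> \<le> 1 + R^2/2 + R^4/8"
  proof -
    have "e4 = 1 - t^2/2 + t^4/8" by (simp add: e4_def u_def power_divide flip: power_mult)
    moreover have "0 \<le> t^2" "0 \<le> t^4" "0 \<le> R^2" "0 \<le> R^4" by simp_all
    ultimately show ?thesis using t2 t4 unfolding abs_le_iff by linarith
  qed
  have B5: "\<bar>c4 * e4 - q\<bar> \<le> (R^2/16 + R^4/48 + R^6/192) * t^6"
  proof -
    have "c4 * e4 - q = (x^2/16 - x^4/48 + x^4*t^2/192) * t^6"
    proof -
      have a: "c4 = 1 + x^2*t^2/2 + (x^2)^2*(t^2)^2/24" by (simp add: c4_def y_def power_mult_distrib flip: power_mult)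
      have b: "e4 = 1 - t^2/2 + (t^2)^2/8" by (simp add: e4_def u_def power_divide flip: power_mult)
      have c: "q = 1 + (x^2-1)*t^2/2 + ((x^2)^2 - 6*x^2 + 3)*(t^2)^2/24" by (simp add: q_def flip: power_mult)
      show ?thesis unfolding a b c polyid by (simp flip: power_mult)
    qed
    moreover have "\<bar>x^2/16 - x^4/48 + x^4*t^2/192\<bar> \<le> R^2/16 + R^4/48 + R^6/192"
    proof -
      have "x^4*t^2 \<le> R^4*R^2" using x4 t2 by (intro mult_mono) auto
      then have "x^4*t^2 \<le> R^6" by (simp flip: power_add)
      moreover have "0 \<le> x^4*t^2" by simp
      moreover have "0 \<le> x^4" "0 \<le> x^2" "0 \<le> R^2" "0 \<le> R^4" "0 \<le> R^6" by simp_all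
      ultimately show ?thesis using x2 x4 unfolding abs_le_iff by linarith
    qed
    ultimately show ?thesis by (simp add: abs_mult mult_right_mono)
  qed
  have "\<bar>cosh y * exp u - q\<bar> \<le> \<bar>cosh y * (exp u - e4)\<bar> + \<bar>(cosh y - c4) * e4\<bar> + \<bar>c4 * e4 - q\<bar>"
    unfolding dec by (rule order_trans[OF abs_triangle_ineq add_right_mono[OF abs_triangle_ineq]])
  also have "\<dots> \<le> exp (R^2) * (exp (R^2/2) * (t^6/48)) + exp (R^2) * R^6 / 720 * t^6 * (1 + R^2/2 + R^4/8)
       + (R^2/16 + R^4/48 + R^6/192) * t^6"
    by (intro add_mono abs_mult_le B1 B2 B3 B4 B5)
  also have "\<dots> = K0 R * t^6" by (simp add: K0_def algebra_simps)
  finally show ?thesis by (simp add: y_def u_def q_def)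
qed



lemma N_approx:
  fixes R x a :: real assumes R: "0 < R" and x: "\<bar>x\<bar> \<le> R" and a: "0 \<le> a" "a \<le> R"
  shows "\<bar>Nf x a - (a + (x^2-1)*a^3/6 + (x^4 - 6*x^2 + 3)*a^5/120)\<bar> \<le> K0 R * a^7 / 7"
proof -
  define w where "w t = cosh (x*t) * exp (-(t^2)/2)" for t
  define q where "q t = 1 + (x^2-1)*t^2/2 + (x^4 - 6*x^2 + 3)*t^4/24" for t
  define Q where "Q t = t + (x^2-1)*t^3/6 + (x^4 - 6*x^2 + 3)*t^5/120" for t
  have dQ: "((\<lambda>t. Q t + c * (K0 R * t^7/7)) has_real_derivative q t + c * (K0 R * t^6)) (at t)" for t c
    unfolding Q_def q_def
    by (auto intro!: derivative_eq_intros) (simp add: algebra_simps power2_eq_square power3_eq_cube power4_eq_xxxx add_divide_distrib diff_divide_distrib)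
  have dN: "(Nf x has_real_derivative w t) (at t)" for t
    unfolding w_def by (rule Nf_deriv)
  have ib: "\<bar>w t - q t\<bar> \<le> K0 R * t^6" if "0 \<le> t" "t \<le> a" for t
    unfolding w_def q_def using integrand_bound[OF R x, of t] that a by simp
  define V1 where "V1 t = (Q t + 1 * (K0 R * t^7/7)) - Nf x t" for t
  define V2 where "V2 t = Nf x t - (Q t + (-1) * (K0 R * t^7/7))" for t
  have "V1 0 \<le> V1 a"
  proof (rule DERIV_nonneg_imp_nondecreasing[OF a(1)])
    fix t assume t: "0 \<le> t" "t \<le> a"
    have "(V1 has_real_derivative (q t + 1 * (K0 R * t^6)) - w t) (at t)"
      unfolding V1_def by (intro DERIV_diff dQ dN)
    moreover have "0 \<le> (q t + 1 * (K0 R * t^6)) - w t" using ib[OF t] by (simp add: abs_le_iff)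
    ultimately show "\<exists>y. (V1 has_real_derivative y) (at t) \<and> 0 \<le> y" by blast
  qed
  moreover have "V2 0 \<le> V2 a"
  proof (rule DERIV_nonneg_imp_nondecreasing[OF a(1)])
    fix t assume t: "0 \<le> t" "t \<le> a"
    have "(V2 has_real_derivative w t - (q t + (-1) * (K0 R * t^6))) (at t)"
      unfolding V2_def by (intro DERIV_diff dQ dN)
    moreover have "0 \<le> w t - (q t + (-1) * (K0 R * t^6))" using ib[OF t] by (simp add: abs_le_iff)
    ultimately show "\<exists>y. (V2 has_real_derivative y) (at t) \<and> 0 \<le> y" by blast
  qed
  ultimately have "Nf x a \<le> Q a + K0 R * a^7/7" "Q a - K0 R * a^7/7 \<le> Nf x a"
    by (simp_all add: V1_def V2_def Nf_0 Q_def)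
  then show ?thesis unfolding Q_def[symmetric] abs_le_iff by linarith
qed



definition A0 :: "real \<Rightarrow> real" where "A0 R = (R^2 + 1)/6"
definition B0 :: "real \<Rightarrow> real" where "B0 R = (2 + 4*R^2 + R^4)/180"
definition P0 :: "real \<Rightarrow> real" where "P0 R = A0 R + B0 R * R^2"
definition K2 :: "real \<Rightarrow> real" where "K2 R = exp (P0 R * R^2) * P0 R ^ 3 / 6 + A0 R * B0 R + B0 R ^ 2 * R^2 / 2"
definition L0 :: "real \<Rightarrow> real" where "L0 R = A0 R * R^2 + R^8 / 60"
definition m0 :: "real \<Rightarrow> real" where "m0 R = exp (-(L0 R + P0 R * R^2))"

lemma polyid2: "(1 + (al*A + be*A^2) + (al*A + be*A^2)^2/2) - (1 + al*A + (be + al^2/2)*A^2) = (al*be + be^2*A/2) * (A::real)^3"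
  by (simp add: field_simps power2_eq_square power3_eq_cube)
lemma polyid3: "1 + (X-1)*A/6 + (X^2 - 6*X + 3)*A^2/120 = 1 + ((X-1)/6)*A + ((2 - 4*X - X^2)/180 + ((X-1)/6)^2/2)*(A::real)^2"
  by (simp add: field_simps power2_eq_square)

lemma tri3: "\<bar>(y::real) - e\<bar> \<le> \<bar>e - z\<bar> + \<bar>z - y\<bar>"
  by (smt (verit))

lemma ab_bounds:
  fixes R x :: real assumes x: "\<bar>x\<bar> \<le> R"
  shows "\<bar>(x^2-1)/6\<bar> \<le> A0 R" "\<bar>(2 - 4*x^2 - x^4)/180\<bar> \<le> B0 R" "x^4 \<le> R^4"
proof -
  have xn: "x^n \<le> R^n" for n :: nat
    using power_mono[OF x abs_ge_zero, of n] abs_ge_self[of "x^n"] by (metis order_trans power_abs)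
  have "0 \<le> x^2" "0 \<le> x^4" by simp_all
  then show "\<bar>(x^2-1)/6\<bar> \<le> A0 R" "\<bar>(2 - 4*x^2 - x^4)/180\<bar> \<le> B0 R" "x^4 \<le> R^4"
    using xn[of 2] xn[of 4] unfolding A0_def B0_def abs_le_iff by (simp_all add: field_simps) 
qed

lemma p_bound:
  fixes R x a :: real assumes x: "\<bar>x\<bar> \<le> R" and a: "0 \<le> a" "a \<le> R"
  shows "\<bar>(x^2-1)*a^2/6 + (2 - 4*x^2 - x^4)*a^4/180\<bar> \<le> P0 R * a^2"
proof -
  define al where "al = (x^2-1)/6"
  define be where "be = (2 - 4*x^2 - x^4)/180"
  have e: "(x^2-1)*a^2/6 + (2 - 4*x^2 - x^4)*a^4/180 = al * a^2 + be * a^2 * a^2"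
    by (simp add: al_def be_def power4_eq_xxxx power2_eq_square)
  have a2: "a^2 \<le> R^2" using a by (intro power_mono) auto
  have "\<bar>al * a^2 + be * a^2 * a^2\<bar> \<le> \<bar>al\<bar> * a^2 + \<bar>be\<bar> * a^2 * a^2"
    by (rule order_trans[OF abs_triangle_ineq]) (simp add: abs_mult)
  also have "\<dots> \<le> A0 R * a^2 + B0 R * R^2 * a^2"
    using ab_bounds[OF x] a2 unfolding al_def[symmetric] be_def[symmetric]
    by (intro add_mono mult_right_mono mult_mono) auto
  also have "\<dots> = P0 R * a^2" by (simp add: P0_def algebra_simps)
  finally show ?thesis unfolding e .
qed

lemma T_exp_bound:
  fixes R x a :: real assumes R: "0 < R" and x: "\<bar>x\<bar> \<le> R" and a: "0 \<le> a" "a \<le> R"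
  shows "\<bar>(1 + (x^2-1)*a^2/6 + (x^4 - 6*x^2 + 3)*a^4/120) - exp ((x^2-1)*a^2/6 + (2 - 4*x^2 - x^4)*a^4/180)\<bar> \<le> K2 R * a^6"
proof -
  define al where "al = (x^2-1)/6"
  define be where "be = (2 - 4*x^2 - x^4)/180"
  define p where "p = (x^2-1)*a^2/6 + (2 - 4*x^2 - x^4)*a^4/180"
  have p4: "a^4 = (a^2)^2" "x^4 = (x^2)^2" "a^6 = (a^2)^3" by (simp_all flip: power_mult)
  have pe: "p = al * a^2 + be * (a^2)^2" unfolding p_def al_def be_def p4 by simp
  have Te: "1 + (x^2-1)*a^2/6 + (x^4 - 6*x^2 + 3)*a^4/120 = 1 + al*a^2 + (be + al^2/2)*(a^2)^2"
    unfolding al_def be_def p4 by (rule polyid3)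
  have d1: "(1 + p + p^2/2) - (1 + al*a^2 + (be + al^2/2)*(a^2)^2) = (al*be + be^2*a^2/2) * a^6"
    unfolding pe p4(3) by (rule polyid2)
  have a2: "a^2 \<le> R^2" using a by (intro power_mono) auto
  have pb: "\<bar>p\<bar> \<le> P0 R * a^2" unfolding p_def by (rule p_bound[OF x a])
  have P0nn: "0 \<le> P0 R" by (simp add: P0_def A0_def B0_def add_nonneg_nonneg)
  have B1: "\<bar>exp p - (1 + p + p^2/2)\<bar> \<le> exp (P0 R * R^2) * P0 R ^ 3 / 6 * a^6"
  proof -
    have "\<bar>exp p - (1 + p + p^2/2)\<bar> \<le> exp \<bar>p\<bar> * \<bar>p\<bar>^3 / 6" by (rule exp_taylor3)
    also have "\<dots> \<le> exp (P0 R * R^2) * (P0 R * a^2)^3 / 6"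
    proof -
      have "\<bar>p\<bar> \<le> P0 R * R^2" using pb a2 P0nn by (meson mult_left_mono order_trans)
      moreover have "\<bar>p\<bar>^3 \<le> (P0 R * a^2)^3" using pb by (intro power_mono) auto
      ultimately show ?thesis by (intro divide_right_mono mult_mono) auto
    qed
    also have "\<dots> = exp (P0 R * R^2) * P0 R ^ 3 / 6 * a^6"
      by (simp add: power_mult_distrib flip: power_mult)
    finally show ?thesis .
  qed
  have B2: "\<bar>(al*be + be^2*a^2/2) * a^6\<bar> \<le> (A0 R * B0 R + B0 R ^ 2 * R^2 / 2) * a^6"
  proof -
    have al: "\<bar>al\<bar> \<le> A0 R" and be: "\<bar>be\<bar> \<le> B0 R" using ab_bounds[OF x] by (simp_all add: al_def be_def)
    have "\<bar>al*be + be^2*a^2/2\<bar> \<le> \<bar>al\<bar>*\<bar>be\<bar> + \<bar>be\<bar>^2*a^2/2"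
      by (rule order_trans[OF abs_triangle_ineq]) (simp add: abs_mult)
    also have "\<dots> \<le> A0 R * B0 R + B0 R ^ 2 * R^2 / 2"
      using al be a2 a by (intro add_mono mult_mono divide_right_mono power_mono) auto
    finally show ?thesis by (simp add: abs_mult mult_right_mono)
  qed
  have "\<bar>(1 + al*a^2 + (be + al^2/2)*a^4) - exp p\<bar> \<le> \<bar>exp p - (1 + p + p^2/2)\<bar> + \<bar>(al*be + be^2*a^2/2) * a^6\<bar>"
    using d1 by (simp add: abs_le_iff) linarith
  also have "\<dots> \<le> K2 R * a^6" using B1 B2 by (simp add: K2_def algebra_simps)
  finally show ?thesis unfolding Te p_def p4(1)[symmetric] .
qed

lemma ln_diff_bound:
  fixes u v m :: real assumes "0 < m" "m \<le> u" "m \<le> v"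
  shows "\<bar>ln u - ln v\<bar> \<le> \<bar>u - v\<bar> / m"
proof -
  have u: "0 < u" and v: "0 < v" using assms by auto
  have 1: "ln u - ln v \<le> \<bar>u - v\<bar> / m"
  proof -
    have "ln u - ln v = ln (u/v)" using u v by (simp add: ln_div)
    also have "\<dots> \<le> u/v - 1" using u v by (intro ln_le_minus_one) auto
    also have "\<dots> = (u - v)/v" using v by (simp add: field_simps)
    also have "\<dots> \<le> \<bar>u - v\<bar>/v" using v by (intro divide_right_mono) auto
    also have "\<dots> \<le> \<bar>u - v\<bar>/m" using assms by (intro divide_left_mono) auto
    finally show ?thesis .
  qed
  have 2: "ln v - ln u \<le> \<bar>u - v\<bar> / m"
  proof -
    have "ln v - ln u = ln (v/u)" using u v by (simp add: ln_div)
    also have "\<dots> \<le> v/u - 1" using u v by (intro ln_le_minus_one) auto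
    also have "\<dots> = (v - u)/u" using u by (simp add: field_simps)
    also have "\<dots> \<le> \<bar>u - v\<bar>/u" using u by (intro divide_right_mono) auto
    also have "\<dots> \<le> \<bar>u - v\<bar>/m" using assms by (intro divide_left_mono) auto
    finally show ?thesis .
  qed
  show ?thesis using 1 2 by (simp add: abs_le_iff)
qed


lemma part2_pos:
  fixes R x h :: real assumes R: "0 < R" and x: "\<bar>x\<bar> \<le> R" and h: "0 < h" "h \<le> R"
  shows "\<bar>ln (ratio31 x h) - ((x^2 - 1) * h^2 / 24 + (2 - 4 * x^2 - x^4) * h^4 / 2880)\<bar>
           \<le> (K0 R / 7 + K2 R) / (64 * m0 R) * h^6"
proof -
  define a where "a = h/2"
  have a: "0 < a" "a \<le> R" using h by (auto simp: a_def)
  define G where "G = Nf x a / a"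
  define T where "T = 1 + (x^2-1)*a^2/6 + (x^4 - 6*x^2 + 3)*a^4/120"
  define p where "p = (x^2-1)*a^2/6 + (2 - 4*x^2 - x^4)*a^4/180"
  have rG: "ratio31 x h = G" using ratio_Nf[of h x] h by (simp add: G_def a_def)
  have pe: "(x^2 - 1) * h^2 / 24 + (2 - 4 * x^2 - x^4) * h^4 / 2880 = p"
    by (simp add: p_def a_def power_divide)
  have he: "h^6 = 64 * a^6" by (simp add: a_def power_divide)
  have GT: "\<bar>G - T\<bar> \<le> K0 R / 7 * a^6"
  proof -
    have Q: "a + (x^2-1)*a^3/6 + (x^4 - 6*x^2 + 3)*a^5/120 = a * T"
      by (simp add: T_def algebra_simps eval_nat_numeral)
    have nb: "\<bar>Nf x a - a * T\<bar> \<le> K0 R * a^7 / 7"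
      using N_approx[OF R x less_imp_le[OF a(1)] a(2)] unfolding Q .
    have "G - T = (Nf x a - a * T) / a" using a by (simp add: G_def field_simps)
    then have "\<bar>G - T\<bar> = \<bar>Nf x a - a * T\<bar> / a" using a by (simp add: abs_divide)
    also have "\<dots> \<le> (K0 R * a^7 / 7) / a"
      using nb a by (intro divide_right_mono) auto
    also have "\<dots> = K0 R / 7 * a^6" using a by (simp add: eval_nat_numeral field_simps)
    finally show ?thesis .
  qed
  have Tp: "\<bar>T - exp p\<bar> \<le> K2 R * a^6"
    unfolding T_def p_def by (rule T_exp_bound[OF R x less_imp_le[OF a(1)] a(2)])
  have Gp: "\<bar>G - exp p\<bar> \<le> (K0 R / 7 + K2 R) * a^6"
    using GT Tp tri3[of G "exp p" T] by (simp add: distrib_right abs_minus_commute)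
  have a2: "a^2 \<le> R^2" using a by (intro power_mono) auto
  have A0nn: "0 \<le> A0 R" and P0nn: "0 \<le> P0 R" by (simp_all add: A0_def P0_def B0_def add_nonneg_nonneg)
  have L0nn: "0 \<le> L0 R" using A0nn by (simp add: L0_def)
  have pb: "\<bar>p\<bar> \<le> P0 R * R^2"
    using p_bound[OF x less_imp_le[OF a(1)] a(2)] a2 P0nn unfolding p_def[symmetric]
    by (meson mult_left_mono order_trans)
  have m0p: "m0 R \<le> exp p"
    unfolding m0_def using pb L0nn by simp
  have m0G: "m0 R \<le> G"
  proof -
    define l where "l = (x^2-1)*a^2/6 - x^4*a^4/60"
    have "a * exp l < Nf x a" using lower_N[OF a(1), of x] by (simp add: l_def)
    then have "exp l < G" using a by (simp add: G_def field_simps)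
    moreover have "-(L0 R) \<le> l"
    proof -
      have b: "\<bar>(x^2-1)/6\<bar> \<le> A0 R" "x^4 \<le> R^4" using ab_bounds[OF x] by auto
      have "\<bar>(x^2-1)/6 * a^2\<bar> \<le> A0 R * R^2" unfolding abs_mult by (rule mult_mono) (use b a2 in auto)
      moreover have "x^4 * a^4 \<le> R^4 * R^4"
        by (rule mult_mono[OF b(2) power_mono]) (use a in auto)
      ultimately show ?thesis unfolding l_def L0_def
        by (simp add: abs_le_iff field_simps flip: power_add)
    qed
    ultimately have "exp (-(L0 R)) < G" by (meson exp_le_cancel_iff le_less_trans)
    moreover have "m0 R \<le> exp (-(L0 R))" unfolding m0_def using P0nn by simp
    ultimately show ?thesis by simp
  qed
  have m0pos: "0 < m0 R" by (simp add: m0_def)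
  have "\<bar>ln G - ln (exp p)\<bar> \<le> \<bar>G - exp p\<bar> / m0 R"
    by (rule ln_diff_bound[OF m0pos m0G m0p])
  also have "\<dots> \<le> (K0 R / 7 + K2 R) * a^6 / m0 R"
    using Gp m0pos by (simp add: divide_right_mono)
  also have "\<dots> = (K0 R / 7 + K2 R) / (64 * m0 R) * h^6"
    using m0pos by (simp add: he field_simps)
  finally show ?thesis unfolding rG pe by simp
qed

lemma part2:
  fixes R :: real assumes R: "0 < R"
  shows "\<exists>C::real. \<forall>x h::real. \<bar>x\<bar> \<le> R \<longrightarrow> \<bar>h\<bar> \<le> R \<longrightarrow> h \<noteq> 0 \<longrightarrow>
           \<bar>ln (ratio31 x h) - ((x^2 - 1) * h^2 / 24 + (2 - 4 * x^2 - x^4) * h^4 / 2880)\<bar>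
             \<le> C * h^6"
proof (intro exI allI impI)
  fix x h :: real assume x: "\<bar>x\<bar> \<le> R" and h: "\<bar>h\<bar> \<le> R" "h \<noteq> 0"
  show "\<bar>ln (ratio31 x h) - ((x^2 - 1) * h^2 / 24 + (2 - 4 * x^2 - x^4) * h^4 / 2880)\<bar>
             \<le> (K0 R / 7 + K2 R) / (64 * m0 R) * h^6"
  proof (cases "0 < h")
    case True
    then show ?thesis using part2_pos[OF R x True] h by simp
  next
    case False
    then have "0 < -h" "-h \<le> R" using h by auto
    from part2_pos[OF R x this] show ?thesis by (simp add: ratio_even)
  qed
qed

lemma part5: "(INF x \<in> - {0::real}. (2 - 4 * x^2 - x^4) / x^4) = -3"
proof -
  have le: "-3 \<le> (2 - 4 * x^2 - x^4) / x^4" if "x \<noteq> 0" for x :: real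
  proof -
    have pos: "0 < x^4" using that by simp
    have "0 \<le> 2 * (x^2 - 1)^2" by simp
    then have "-3 * x^4 \<le> 2 - 4 * x^2 - x^4" by (simp add: power2_eq_square power4_eq_xxxx algebra_simps)
    then show ?thesis using pos by (simp add: le_divide_eq)
  qed
  show ?thesis unfolding image_def
    by (rule cInf_eq_minimum[where z="-3"]) (use le in \<open>force+\<close>)
qed


theorem lemma3p1:
  shows "(\<forall>x h::real. h \<noteq> 0 \<longrightarrow>
           exp ((x^2 - 1) * h^2 / 24 - x^4 * h^4 / 960) < ratio31 x h \<and>
           ratio31 x h < exp ((x^2 - 1) * h^2 / 24 + h^4 / 1440))
       \<and> (\<forall>R>0::real. \<exists>C::real. \<forall>x h::real. \<bar>x\<bar> \<le> R \<longrightarrow> \<bar>h\<bar> \<le> R \<longrightarrow> h \<noteq> 0 \<longrightarrow>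
           \<bar>ln (ratio31 x h) - ((x^2 - 1) * h^2 / 24 + (2 - 4 * x^2 - x^4) * h^4 / 2880)\<bar>
             \<le> C * h^6)
       \<and> (\<forall>x::real. 2 - 4 * x^2 - x^4 \<le> 2) \<and> (\<exists>x::real. 2 - 4 * x^2 - x^4 = 2)
       \<and> (INF x \<in> - {0::real}. (2 - 4 * x^2 - x^4) / x^4) = -3"
proof (intro conjI allI impI)
  fix x h :: real assume "h \<noteq> 0"
  then show "exp ((x^2 - 1) * h^2 / 24 - x^4 * h^4 / 960) < ratio31 x h"
    "ratio31 x h < exp ((x^2 - 1) * h^2 / 24 + h^4 / 1440)" using part1 by auto
next
  fix R :: real assume "0 < R"
  then show "\<exists>C::real. \<forall>x h::real. \<bar>x\<bar> \<le> R \<longrightarrow> \<bar>h\<bar> \<le> R \<longrightarrow> h \<noteq> 0 \<longrightarrow>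
           \<bar>ln (ratio31 x h) - ((x^2 - 1) * h^2 / 24 + (2 - 4 * x^2 - x^4) * h^4 / 2880)\<bar>
             \<le> C * h^6" by (rule part2)
next
  fix x :: real
  have "0 \<le> x^2" "0 \<le> x^4" by simp_all
  then show "2 - 4 * x^2 - x^4 \<le> 2" by linarith
next
  show "\<exists>x::real. 2 - 4 * x^2 - x^4 = 2" by (rule exI[of _ 0]) simp
next
  show "(INF x \<in> - {0::real}. (2 - 4 * x^2 - x^4) / x^4) = -3" by (rule part5)
qed

end
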